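(* Let $\{S_0,S_1,\dots,S_m\}$ be an admissible cover of $S$ and $\ell\in\{0,1,\dots,m\}$. If $\mathbf r,\mathbf s\in\mathbb V_{\mathbb F}\big(\bigcup_{i=0}^{\ell-1}S_i\big)$, then for every $c_\alpha(\mathbf a)\in\bigcup_{i=0}^{\ell}S_i$ we have $L_{\mathbf a=\mathbf r}(c_\alpha)=L_{\mathbf a=\mathbf s}(c_\alpha)$ as polynomials in $\mathbf a$; in particular $c_\alpha(\mathbf r)=L_{\mathbf a=\mathbf s}(c_\alpha)(\mathbf r)$.
   Context: Let $\mathbb F$ be a field of characteristic zero, $\mathbf x=(x_1,\dots,x_n)$ variables and $\mathbf a=(a_1,\dots,a_n)$ new indeterminates. For $p,q\in\mathbb F[\mathbf x]$ write $p(\mathbf x+\mathbf a)-q(\mathbf x)=\sum_{\alpha\in\mathbb N^n}c_\alpha(\mathbf a)\mathbf x^\alpha$ with $c_\alpha(\mathbf a)\in\mathbb F[\mathbf a]$, and let $S$ be the family of nonzero coefficients $c_\alpha(\mathbf a)$ (indexed by $\alpha$). On $\mathbb N^n$, $\beta\ge\alpha$ means componentwise $\ge$, and $\beta>\alpha$ means $\beta\ge\alpha$, $\beta\ne\alpha$. A cover of $S$ is a collection $\{S_0,\dots,S_m\}$ of subsets whose union is $S$; it is admissible if (1) every polynomial in $S_0$ has total degree at most one in $\mathbf a$; and (2) for every $\ell=1,\dots,m$, if $c_\alpha\in S_\ell$ then $c_\beta\in\bigcup_{i=0}^{\ell-1}S_i$ for all $\beta>\alpha$ with $c_\beta\neq0$.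 For $f\in\mathbb F[\mathbf a]$ with homogeneous decomposition $f=\sum_{i\ge0}H^i(f)$ in $\mathbf a$ and $\mathbf s\in\mathbb F^n$, the linearization is $L_{\mathbf a=\mathbf s}(f)=H^0(f)+H^1(f)(\mathbf a)+\sum_{i\ge2}H^i(f)(\mathbf s)$. For $P\subseteq\mathbb F[\mathbf a]$, $\mathbb V_{\mathbb F}(P)$ is the set of common zeros of $P$ in $\mathbb F^n$ ($\mathbb V_{\mathbb F}(\varnothing)=\mathbb F^n$). *)

theory Defs
  imports Main "HOL-Library.Poly_Mapping"
begin

text \<open>Multivariate polynomials over a field 'a in variables indexed by a finite type 'v
  (so n = CARD('v)) are represented as finitely supported maps from exponent vectors
  (exponent vectors) to coefficients.\<close>

type_synonym ('v,'a) mpoly = "('v \<Rightarrow>\<^sub>0 nat) \<Rightarrow>\<^sub>0 'a"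

definition mvar :: "'v \<Rightarrow> ('v,'a::comm_ring_1) mpoly" where
  "mvar i = Poly_Mapping.single (Poly_Mapping.single i 1) 1"

definition mconst :: "'a \<Rightarrow> ('v,'a::zero) mpoly" where
  "mconst c = Poly_Mapping.single 0 c"

definition meval :: "('v::finite,'a::comm_ring_1) mpoly \<Rightarrow> ('v \<Rightarrow> 'a) \<Rightarrow> 'a" where
  "meval f s = (\<Sum>m\<in>Poly_Mapping.keys f. Poly_Mapping.lookup f m * (\<Prod>i\<in>UNIV. s i ^ Poly_Mapping.lookup (m::'v \<Rightarrow>\<^sub>0 nat) i))"

definition mdeg :: "('v::finite \<Rightarrow>\<^sub>0 nat) \<Rightarrow> nat" where
  "mdeg m = (\<Sum>i\<in>UNIV. Poly_Mapping.lookup m i)"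

definition total_deg_le :: "('v::finite,'a::zero) mpoly \<Rightarrow> nat \<Rightarrow> bool" where
  "total_deg_le f d \<longleftrightarrow> (\<forall>m\<in>Poly_Mapping.keys f. mdeg m \<le> d)"

definition hcomp :: "nat \<Rightarrow> ('v::finite,'a::comm_ring_1) mpoly \<Rightarrow> ('v,'a) mpoly" where
  "hcomp k f = (\<Sum>m\<in>{m\<in>Poly_Mapping.keys f. mdeg m = k}. Poly_Mapping.single m (Poly_Mapping.lookup f m))"

text \<open>Linearization L_{a=s}(f) = H^0(f) + H^1(f)(a) + sum_{k>=2} H^k(f)(s); the sum ranges
  over the finitely many degrees k >= 2 that occur in f (all other components vanish).\<close>
definition linearize :: "('v::finite \<Rightarrow> 'a::comm_ring_1) \<Rightarrow> ('v,'a) mpoly \<Rightarrow> ('v,'a) mpoly" where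
  "linearize s f = hcomp 0 f + hcomp 1 f
     + mconst (\<Sum>k\<in>{k\<in>mdeg ` Poly_Mapping.keys f. 2 \<le> k}. meval (hcomp k f) s)"

definition zero_set :: "('v::finite,'a::comm_ring_1) mpoly set \<Rightarrow> ('v \<Rightarrow> 'a) set" where
  "zero_set P = {s. \<forall>f\<in>P. meval f s = 0}"

text \<open>p(x + a) as a polynomial in x with coefficients in F[a].\<close>
definition shift_poly :: "('v::finite,'a::comm_ring_1) mpoly \<Rightarrow> ('v, ('v,'a) mpoly) mpoly" where
  "shift_poly p = (\<Sum>\<beta>\<in>Poly_Mapping.keys p. mconst (mconst (Poly_Mapping.lookup p \<beta>))
        * (\<Prod>i\<in>UNIV. (mvar i + mconst (mvar i)) ^ Poly_Mapping.lookup \<beta> i))"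

definition lift_poly :: "('v::finite,'a::comm_ring_1) mpoly \<Rightarrow> ('v, ('v,'a) mpoly) mpoly" where
  "lift_poly q = (\<Sum>\<beta>\<in>Poly_Mapping.keys q. Poly_Mapping.single \<beta> (mconst (Poly_Mapping.lookup q \<beta>)))"

definition cf :: "('v::finite,'a::comm_ring_1) mpoly \<Rightarrow> ('v,'a) mpoly \<Rightarrow> ('v \<Rightarrow>\<^sub>0 nat) \<Rightarrow> ('v,'a) mpoly" where
  "cf p q \<alpha> = Poly_Mapping.lookup (shift_poly p - lift_poly q) \<alpha>"

definition exp_ge :: "('v \<Rightarrow>\<^sub>0 nat) \<Rightarrow> ('v \<Rightarrow>\<^sub>0 nat) \<Rightarrow> bool" where
  "exp_ge \<beta> \<alpha> \<longleftrightarrow> (\<forall>i. Poly_Mapping.lookup \<alpha> i \<le> Poly_Mapping.lookup \<beta> i)"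

definition exp_gt :: "('v \<Rightarrow>\<^sub>0 nat) \<Rightarrow> ('v \<Rightarrow>\<^sub>0 nat) \<Rightarrow> bool" where
  "exp_gt \<beta> \<alpha> \<longleftrightarrow> exp_ge \<beta> \<alpha> \<and> \<beta> \<noteq> \<alpha>"

text \<open>Admissible cover {S_0,...,S_m} of S = {c_alpha nonzero}; the family is indexed by
  the exponents alpha, so each S_l is given as a set of exponents.\<close>
definition admissible_cover ::
  "('v::finite,'a::comm_ring_1) mpoly \<Rightarrow> ('v,'a) mpoly \<Rightarrow> (nat \<Rightarrow> ('v \<Rightarrow>\<^sub>0 nat) set) \<Rightarrow> nat \<Rightarrow> bool" where
  "admissible_cover p q Sc m \<longleftrightarrow>
     (\<Union>i\<in>{0..m}. Sc i) = {\<alpha>. cf p q \<alpha> \<noteq> 0}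
     \<and> (\<forall>\<alpha>\<in>Sc 0. total_deg_le (cf p q \<alpha>) 1)
     \<and> (\<forall>l\<in>{1..m}. \<forall>\<alpha>\<in>Sc l. \<forall>\<beta>. exp_gt \<beta> \<alpha> \<and> cf p q \<beta> \<noteq> 0 \<longrightarrow> \<beta> \<in> (\<Union>i\<in>{0..<l}. Sc i))"

end

theory Submission
  imports Defs "HOL-Computational_Algebra.Polynomial" "HOL-Library.FuncSet"
begin


definition mono :: "('v::finite \<Rightarrow> 'a::comm_ring_1) \<Rightarrow> ('v \<Rightarrow> nat) \<Rightarrow> 'a" where
  "mono a \<mu> = (\<Prod>i\<in>UNIV. a i ^ \<mu> i)"
definition fdeg :: "('v::finite \<Rightarrow> nat) \<Rightarrow> nat" where
  "fdeg \<mu> = (\<Sum>i\<in>UNIV. \<mu> i)"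
definition Bn :: "('v::finite \<Rightarrow> nat) \<Rightarrow> ('v \<Rightarrow> nat) \<Rightarrow> 'a::comm_ring_1" where
  "Bn \<alpha> \<mu> = (\<Prod>i\<in>UNIV. of_nat ((\<alpha> i + \<mu> i) choose \<mu> i))"
definition Cm :: "('v::finite \<Rightarrow> nat) \<Rightarrow> ('v \<Rightarrow> nat) \<Rightarrow> 'a::comm_ring_1" where
  "Cm \<mu> \<nu> = (\<Prod>i\<in>UNIV. of_nat (\<mu> i choose \<nu> i))"
definition box :: "nat \<Rightarrow> ('v \<Rightarrow> nat) set" where
  "box N = {\<mu>. \<forall>i. \<mu> i \<le> N}"

lemma finite_box: "finite (box N :: ('v::finite \<Rightarrow> nat) set)"
proof -
  have "box N = PiE (UNIV::'v set) (\<lambda>_. {..N})"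
    by (auto simp: box_def PiE_UNIV_domain)
  then show ?thesis by (simp add: finite_PiE)
qed

lemma mono_expand:
  fixes a r :: "'v::finite \<Rightarrow> 'a::comm_ring_1"
  shows "mono (\<lambda>i. a i + r i) \<mu> = (\<Sum>\<nu>\<in>{\<nu>. \<forall>i. \<nu> i \<le> \<mu> i}. Cm \<mu> \<nu> * mono a \<nu> * mono r (\<lambda>i. \<mu> i - \<nu> i))"
proof -
  have "mono (\<lambda>i. a i + r i) \<mu> = (\<Prod>i\<in>UNIV. \<Sum>k\<in>{..\<mu> i}. of_nat (\<mu> i choose k) * a i ^ k * r i ^ (\<mu> i - k))"
    unfolding mono_def by (simp add: binomial_ring)
  also have "\<dots> = (\<Sum>g\<in>PiE UNIV (\<lambda>i. {..\<mu> i}). \<Prod>i\<in>UNIV. of_nat (\<mu> i choose g i) * a i ^ g i * r i ^ (\<mu> i - g i))"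
    by (rule prod_sum_PiE) auto
  also have "PiE UNIV (\<lambda>i. {..\<mu> i}) = {\<nu>. \<forall>i. \<nu> i \<le> \<mu> i}"
    by (auto simp: PiE_UNIV_domain)
  also have "(\<Sum>g\<in>{\<nu>. \<forall>i. \<nu> i \<le> \<mu> i}. \<Prod>i\<in>UNIV. of_nat (\<mu> i choose g i) * a i ^ g i * r i ^ (\<mu> i - g i))
     = (\<Sum>\<nu>\<in>{\<nu>. \<forall>i. \<nu> i \<le> \<mu> i}. Cm \<mu> \<nu> * mono a \<nu> * mono r (\<lambda>i. \<mu> i - \<nu> i))"
    by (simp add: Cm_def mono_def prod.distrib)
  finally show ?thesis .
qed

lemma choose_identity:
  "((x + (y + z)) choose (y + z)) * ((y + z) choose y) = ((x + y) choose y) * ((x + y + z) choose z)"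
proof -
  have f: "fact (a + b) = fact a * fact b * ((a + b) choose b)" for a b :: nat
    using binomial_fact_lemma[of b "a+b"] by (simp add: mult.commute mult.left_commute)
  have "fact x * fact y * fact z * (((x + (y + z)) choose (y + z)) * ((y + z) choose y))
      = fact (x + y + z)"
    using f[of x "y+z"] f[of z y] by (simp add: add.commute add.left_commute mult.commute mult.left_commute)
  moreover have "fact x * fact y * fact z * (((x + y) choose y) * ((x + y + z) choose z)) = fact (x + y + z)"
    using f[of x y] f[of "x+y" z] by (simp add: mult.commute mult.left_commute)
  ultimately show ?thesis
    by (metis (no_types, lifting) fact_nonzero mult_cancel_left mult_eq_0_iff)
qed

definition PP :: "(('v::finite \<Rightarrow> nat) \<Rightarrow> 'a::comm_ring_1) \<Rightarrow> nat \<Rightarrow> ('v \<Rightarrow> nat) \<Rightarrow> ('v \<Rightarrow> 'a) \<Rightarrow> 'a" where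
  "PP P N \<beta> a = (\<Sum>\<mu>\<in>box N. P (\<lambda>i. \<beta> i + \<mu> i) * Bn \<beta> \<mu> * mono a \<mu>)"

definition tt :: "(('v::finite \<Rightarrow> nat) \<Rightarrow> 'a::comm_ring_1) \<Rightarrow> ('v \<Rightarrow> nat) \<Rightarrow> ('v \<Rightarrow> nat) \<Rightarrow> 'a" where
  "tt P \<alpha> \<mu> = (if 2 \<le> fdeg \<mu> then P (\<lambda>i. \<alpha> i + \<mu> i) * Bn \<alpha> \<mu> else 0)"

definition TT :: "(('v::finite \<Rightarrow> nat) \<Rightarrow> 'a::comm_ring_1) \<Rightarrow> nat \<Rightarrow> ('v \<Rightarrow> nat) \<Rightarrow> ('v \<Rightarrow> 'a) \<Rightarrow> 'a" where
  "TT P N \<alpha> a = (\<Sum>\<mu>\<in>box N. tt P \<alpha> \<mu> * mono a \<mu>)"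

definition XX :: "(('v::finite \<Rightarrow> nat) \<Rightarrow> 'a::comm_ring_1) \<Rightarrow> nat \<Rightarrow> ('v \<Rightarrow> nat) \<Rightarrow> ('v \<Rightarrow> nat) \<Rightarrow> ('v \<Rightarrow> 'a) \<Rightarrow> 'a" where
  "XX P N \<alpha> \<nu> a = (\<Sum>\<kappa>\<in>box N. (if 2 \<le> fdeg (\<lambda>i. \<nu> i + \<kappa> i) then P (\<lambda>i. \<alpha> i + \<nu> i + \<kappa> i) * Bn (\<lambda>i. \<alpha> i + \<nu> i) \<kappa> else 0) * mono a \<kappa>)"

lemma Bn_Cm:
  "Bn \<alpha> (\<lambda>i. \<nu> i + \<kappa> i) * Cm (\<lambda>i. \<nu> i + \<kappa> i) \<nu> = (Bn \<alpha> \<nu> * Bn (\<lambda>i. \<alpha> i + \<nu> i) \<kappa> :: 'a::comm_ring_1)"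
proof -
  have "Bn \<alpha> (\<lambda>i. \<nu> i + \<kappa> i) * Cm (\<lambda>i. \<nu> i + \<kappa> i) \<nu>
     = (\<Prod>i\<in>UNIV. (of_nat (((\<alpha> i + (\<nu> i + \<kappa> i)) choose (\<nu> i + \<kappa> i)) * ((\<nu> i + \<kappa> i) choose \<nu> i)) :: 'a))"
    by (simp add: Bn_def Cm_def prod.distrib)
  also have "\<dots> = (\<Prod>i\<in>UNIV. (of_nat (((\<alpha> i + \<nu> i) choose \<nu> i) * ((\<alpha> i + \<nu> i + \<kappa> i) choose \<kappa> i)) :: 'a))"
    by (simp only: choose_identity)
  also have "\<dots> = Bn \<alpha> \<nu> * Bn (\<lambda>i. \<alpha> i + \<nu> i) \<kappa>"
    by (simp add: Bn_def prod.distrib)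
  finally show ?thesis .
qed

lemma fdeg_add: "fdeg (\<lambda>i. \<nu> i + \<kappa> i) = fdeg \<nu> + fdeg \<kappa>"
  by (simp add: fdeg_def sum.distrib)

lemma fdeg_zero_iff: "fdeg \<nu> = 0 \<longleftrightarrow> \<nu> = (\<lambda>_. 0)"
  by (auto simp: fdeg_def fun_eq_iff)

lemma mono_zero [simp]: "mono a (\<lambda>_. 0) = 1"
  by (simp add: mono_def)

lemma Bn_zero [simp]: "Bn \<alpha> (\<lambda>_. 0) = 1"
  by (simp add: Bn_def)

lemma zero_in_box [simp]: "(\<lambda>_. 0) \<in> box N"
  by (simp add: box_def)

lemma step1:
  fixes P :: "('v::finite \<Rightarrow> nat) \<Rightarrow> 'a::comm_ring_1"
  assumes supp: "\<And>\<gamma>. P \<gamma> \<noteq> 0 \<Longrightarrow> \<gamma> \<in> box N"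
  shows "TT P N \<alpha> (\<lambda>i. a i + r i) = (\<Sum>\<nu>\<in>box N. mono a \<nu> * Bn \<alpha> \<nu> * XX P N \<alpha> \<nu> r)"
proof -
  let ?g = "\<lambda>\<mu> \<nu>. tt P \<alpha> \<mu> * (Cm \<mu> \<nu> * mono a \<nu> * mono r (\<lambda>i. \<mu> i - \<nu> i))"
  have "TT P N \<alpha> (\<lambda>i. a i + r i) = (\<Sum>\<mu>\<in>box N. \<Sum>\<nu>\<in>{\<nu>. \<nu> \<in> box N \<and> (\<forall>i. \<nu> i \<le> \<mu> i)}. ?g \<mu> \<nu>)"
    unfolding TT_def mono_expand sum_distrib_left
  proof (rule sum.cong[OF refl])
    fix \<mu> :: "'v \<Rightarrow> nat" assume "\<mu> \<in> box N"
    then have "{\<nu>. \<forall>i. \<nu> i \<le> \<mu> i} = {\<nu>. \<nu> \<in> box N \<and> (\<forall>i. \<nu> i \<le> \<mu> i)}"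
      by (auto simp: box_def intro: order_trans)
    then show "(\<Sum>\<nu>\<in>{\<nu>. \<forall>i. \<nu> i \<le> \<mu> i}. ?g \<mu> \<nu>) = (\<Sum>\<nu>\<in>{\<nu>. \<nu> \<in> box N \<and> (\<forall>i. \<nu> i \<le> \<mu> i)}. ?g \<mu> \<nu>)"
      by simp
  qed
  also have "\<dots> = (\<Sum>\<nu>\<in>box N. \<Sum>\<mu>\<in>{\<mu>. \<mu> \<in> box N \<and> (\<forall>i. \<nu> i \<le> \<mu> i)}. ?g \<mu> \<nu>)"
    by (rule sum.swap_restrict[OF finite_box finite_box])
  also have "\<dots> = (\<Sum>\<nu>\<in>box N. mono a \<nu> * Bn \<alpha> \<nu> * XX P N \<alpha> \<nu> r)"
  proof (rule sum.cong[OF refl])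
    fix \<nu> :: "'v \<Rightarrow> nat" assume \<nu>: "\<nu> \<in> box N"
    let ?h = "\<lambda>\<kappa>::'v\<Rightarrow>nat. \<lambda>i. \<nu> i + \<kappa> i"
    have inj: "inj ?h" by (auto simp: inj_def fun_eq_iff)
    have img: "{\<mu>. \<mu> \<in> box N \<and> (\<forall>i. \<nu> i \<le> \<mu> i)} = ?h ` {\<kappa>. \<kappa> \<in> box N \<and> ?h \<kappa> \<in> box N}"
    proof (rule set_eqI, rule iffI)
      fix \<mu> assume m: "\<mu> \<in> {\<mu>. \<mu> \<in> box N \<and> (\<forall>i. \<nu> i \<le> \<mu> i)}"
      let ?k = "\<lambda>i. \<mu> i - \<nu> i"
      have "\<mu> = ?h ?k" using m by (auto simp: fun_eq_iff)
      moreover have "?k \<in> box N" using m by (auto simp: box_def intro: le_trans[OF diff_le_self])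
      ultimately show "\<mu> \<in> ?h ` {\<kappa>. \<kappa> \<in> box N \<and> ?h \<kappa> \<in> box N}" using m
        by (intro image_eqI[of _ _ ?k]) auto
    qed auto
    have "(\<Sum>\<mu>\<in>{\<mu>. \<mu> \<in> box N \<and> (\<forall>i. \<nu> i \<le> \<mu> i)}. ?g \<mu> \<nu>)
        = (\<Sum>\<kappa>\<in>{\<kappa>. \<kappa> \<in> box N \<and> ?h \<kappa> \<in> box N}. ?g (?h \<kappa>) \<nu>)"
      unfolding img by (rule sum.reindex[OF inj_on_subset[OF inj subset_UNIV], unfolded comp_def])
    also have "\<dots> = (\<Sum>\<kappa>\<in>box N. ?g (?h \<kappa>) \<nu>)"
    proof (rule sum.mono_neutral_left[OF finite_box])
      show "\<forall>\<kappa>\<in>box N - {\<kappa>. \<kappa> \<in> box N \<and> ?h \<kappa> \<in> box N}. ?g (?h \<kappa>) \<nu> = 0"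
      proof
        fix \<kappa> :: "'v \<Rightarrow> nat" assume k: "\<kappa> \<in> box N - {\<kappa>. \<kappa> \<in> box N \<and> ?h \<kappa> \<in> box N}"
        have "(\<lambda>i. \<alpha> i + (\<nu> i + \<kappa> i)) \<notin> box N"
          using k by (auto simp: box_def) (meson le_add2 le_trans)
        then have "P (\<lambda>i. \<alpha> i + (\<nu> i + \<kappa> i)) = 0" using supp by blast
        then show "?g (?h \<kappa>) \<nu> = 0" by (simp add: tt_def)
      qed
    qed auto
    also have "\<dots> = mono a \<nu> * Bn \<alpha> \<nu> * XX P N \<alpha> \<nu> r"
      unfolding XX_def sum_distrib_left
    proof (rule sum.cong[OF refl])
      fix \<kappa> :: "'v \<Rightarrow> nat" assume "\<kappa> \<in> box N"
      have e: "(\<lambda>i. \<nu> i + \<kappa> i - \<nu> i) = \<kappa>" by simp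
      have e2: "(\<lambda>i. \<alpha> i + (\<nu> i + \<kappa> i)) = (\<lambda>i. \<alpha> i + \<nu> i + \<kappa> i)" by (simp add: add.assoc)
      show "?g (?h \<kappa>) \<nu> = mono a \<nu> * Bn \<alpha> \<nu> *
         ((if 2 \<le> fdeg (\<lambda>i. \<nu> i + \<kappa> i) then P (\<lambda>i. \<alpha> i + \<nu> i + \<kappa> i) * Bn (\<lambda>i. \<alpha> i + \<nu> i) \<kappa> else 0) * mono r \<kappa>)"
      proof (cases "2 \<le> fdeg (?h \<kappa>)")
        case True
        have "?g (?h \<kappa>) \<nu> = P (\<lambda>i. \<alpha> i + \<nu> i + \<kappa> i) * mono a \<nu> * mono r \<kappa> * (Bn \<alpha> (?h \<kappa>) * Cm (?h \<kappa>) \<nu>)"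
          by (simp only: tt_def e e2 if_True True) (simp only: ac_simps)
        also have "\<dots> = P (\<lambda>i. \<alpha> i + \<nu> i + \<kappa> i) * mono a \<nu> * mono r \<kappa> * (Bn \<alpha> \<nu> * Bn (\<lambda>i. \<alpha> i + \<nu> i) \<kappa>)"
          by (simp only: Bn_Cm)
        finally show ?thesis using True by (simp only: if_True) (simp only: ac_simps)
      qed (simp add: tt_def)
    qed
    finally show "(\<Sum>\<mu>\<in>{\<mu>. \<mu> \<in> box N \<and> (\<forall>i. \<nu> i \<le> \<mu> i)}. ?g \<mu> \<nu>) = mono a \<nu> * Bn \<alpha> \<nu> * XX P N \<alpha> \<nu> r" .
  qed
  finally show ?thesis .
qed


lemma XX_nonzero:
  fixes P :: "('v::finite \<Rightarrow> nat) \<Rightarrow> 'a::comm_ring_1"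
  assumes nz: "\<nu> \<noteq> (\<lambda>_. 0)"
  shows "XX P N \<alpha> \<nu> a = PP P N (\<lambda>i. \<alpha> i + \<nu> i) a - (if fdeg \<nu> < 2 then P (\<lambda>i. \<alpha> i + \<nu> i) else 0)"
proof -
  let ?f = "\<lambda>\<kappa>. P (\<lambda>i. \<alpha> i + \<nu> i + \<kappa> i) * Bn (\<lambda>i. \<alpha> i + \<nu> i) \<kappa> * mono a \<kappa>"
  have d1: "fdeg \<nu> \<ge> 1" using nz fdeg_zero_iff[of \<nu>] by linarith
  have "XX P N \<alpha> \<nu> a = (\<Sum>\<kappa>\<in>box N. ?f \<kappa> - (if \<kappa> = (\<lambda>_. 0) then (if fdeg \<nu> < 2 then ?f \<kappa> else 0) else 0))"
    unfolding XX_def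
  proof (rule sum.cong[OF refl])
    fix \<kappa> :: "'v \<Rightarrow> nat"
    show "(if 2 \<le> fdeg (\<lambda>i. \<nu> i + \<kappa> i) then P (\<lambda>i. \<alpha> i + \<nu> i + \<kappa> i) * Bn (\<lambda>i. \<alpha> i + \<nu> i) \<kappa> else 0) * mono a \<kappa> =
      ?f \<kappa> - (if \<kappa> = (\<lambda>_. 0) then (if fdeg \<nu> < 2 then ?f \<kappa> else 0) else 0)"
    proof (cases "\<kappa> = (\<lambda>_. 0)")
      case True
      then show ?thesis using d1 by (auto simp: fdeg_add fdeg_zero_iff)
    next
      case False
      then have "fdeg \<kappa> \<ge> 1" using fdeg_zero_iff[of \<kappa>] by linarith
      then show ?thesis using d1 False by (auto simp: fdeg_add)
    qed
  qed
  also have "\<dots> = PP P N (\<lambda>i. \<alpha> i + \<nu> i) a - (if fdeg \<nu> < 2 then P (\<lambda>i. \<alpha> i + \<nu> i) else 0)"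
    by (simp add: sum_subtractf sum.delta[OF finite_box] PP_def)
  finally show ?thesis .
qed

lemma XX_zero: "XX P N \<alpha> (\<lambda>_. 0) a = TT P N \<alpha> a"
proof -
  have e: "(\<lambda>i. \<alpha> i + (0::nat)) = \<alpha>" by simp
  show ?thesis by (simp add: XX_def TT_def tt_def e cong: if_cong)
qed

lemma step3:
  fixes P :: "('v::finite \<Rightarrow> nat) \<Rightarrow> 'a::comm_ring_1"
  assumes supp: "\<And>\<gamma>. P \<gamma> \<noteq> 0 \<Longrightarrow> \<gamma> \<in> box N"
    and hyp: "\<And>\<nu>. \<nu> \<noteq> (\<lambda>_. 0) \<Longrightarrow> PP P N (\<lambda>i. \<alpha> i + \<nu> i) r = PP P N (\<lambda>i. \<alpha> i + \<nu> i) s"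
  shows "TT P N \<alpha> (\<lambda>i. a i + r i) - TT P N \<alpha> (\<lambda>i. a i + s i) = TT P N \<alpha> r - TT P N \<alpha> s"
proof -
  have z: "(\<lambda>_. 0) \<in> box N" by simp
  have eq: "(\<Sum>\<nu>\<in>box N - {\<lambda>_. 0}. mono a \<nu> * Bn \<alpha> \<nu> * XX P N \<alpha> \<nu> r)
      = (\<Sum>\<nu>\<in>box N - {\<lambda>_. 0}. mono a \<nu> * Bn \<alpha> \<nu> * XX P N \<alpha> \<nu> s)"
    by (rule sum.cong[OF refl]) (simp add: XX_nonzero hyp)
  have r: "TT P N \<alpha> (\<lambda>i. a i + r i) = TT P N \<alpha> r + (\<Sum>\<nu>\<in>box N - {\<lambda>_. 0}. mono a \<nu> * Bn \<alpha> \<nu> * XX P N \<alpha> \<nu> r)"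
    using step1[OF supp, where a=a and r=r and \<alpha>=\<alpha>] sum.remove[OF finite_box z, of "\<lambda>\<nu>. mono a \<nu> * Bn \<alpha> \<nu> * XX P N \<alpha> \<nu> r"]
    by (simp add: XX_zero)
  have s: "TT P N \<alpha> (\<lambda>i. a i + s i) = TT P N \<alpha> s + (\<Sum>\<nu>\<in>box N - {\<lambda>_. 0}. mono a \<nu> * Bn \<alpha> \<nu> * XX P N \<alpha> \<nu> s)"
    using step1[OF supp, where a=a and r=s and \<alpha>=\<alpha>] sum.remove[OF finite_box z, of "\<lambda>\<nu>. mono a \<nu> * Bn \<alpha> \<nu> * XX P N \<alpha> \<nu> s"]
    by (simp add: XX_zero)
  show ?thesis unfolding r s eq by simp
qed


lemma TT_zero:
  fixes P :: "('v::finite \<Rightarrow> nat) \<Rightarrow> 'a::comm_ring_1"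
  shows "TT P N \<alpha> (\<lambda>_. 0::'a) = 0"
  unfolding TT_def
proof (rule sum.neutral, rule ballI)
  fix \<mu> :: "'v \<Rightarrow> nat"
  show "tt P \<alpha> \<mu> * mono (\<lambda>_. 0::'a) \<mu> = 0"
  proof (cases "\<mu> = (\<lambda>_. 0)")
    case True then show ?thesis by (simp add: tt_def fdeg_def)
  next
    case False
    then obtain j where "\<mu> j \<noteq> 0" by auto
    then have "mono (\<lambda>_. 0::'a) \<mu> = 0" unfolding mono_def
      by (intro prod_zero) (auto intro!: exI[of _ j] simp: zero_power)
    then show ?thesis by simp
  qed
qed

lemma mono_scale: "mono (\<lambda>i. t * d i) \<mu> = t ^ fdeg \<mu> * mono d \<mu>"
  by (simp add: mono_def fdeg_def power_mult_distrib prod.distrib power_sum)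

lemma core:
  fixes P :: "('v::finite \<Rightarrow> nat) \<Rightarrow> 'a::field_char_0"
  assumes supp: "\<And>\<gamma>. P \<gamma> \<noteq> 0 \<Longrightarrow> \<gamma> \<in> box N"
    and hyp: "\<And>\<nu>. \<nu> \<noteq> (\<lambda>_. 0) \<Longrightarrow> PP P N (\<lambda>i. \<alpha> i + \<nu> i) r = PP P N (\<lambda>i. \<alpha> i + \<nu> i) s"
  shows "TT P N \<alpha> r = TT P N \<alpha> s"
proof -
  define C where "C = TT P N \<alpha> r - TT P N \<alpha> s"
  define d where "d = (\<lambda>i. r i - s i)"
  have trans: "TT P N \<alpha> (\<lambda>i. a i + d i) - TT P N \<alpha> a = C" for a
  proof -
    have "TT P N \<alpha> (\<lambda>i. (a i - s i) + r i) - TT P N \<alpha> (\<lambda>i. (a i - s i) + s i) = C"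
      unfolding C_def by (rule step3[OF supp hyp])
    moreover have "(\<lambda>i. (a i - s i) + r i) = (\<lambda>i. a i + d i)" by (simp add: d_def algebra_simps)
    moreover have "(\<lambda>i. (a i - s i) + s i) = a" by simp
    ultimately show ?thesis by simp
  qed
  have ind: "TT P N \<alpha> (\<lambda>i. of_nat k * d i) = of_nat k * C" for k
  proof (induction k)
    case 0
    then show ?case using TT_zero[of P N \<alpha>] by simp
  next
    case (Suc k)
    have "(\<lambda>i. of_nat (Suc k) * d i) = (\<lambda>i. of_nat k * d i + d i)" by (simp add: algebra_simps)
    then show ?case using trans[of "\<lambda>i. of_nat k * d i"] Suc by (simp add: algebra_simps)
  qed
  define g :: "'a poly" where
    "g = (\<Sum>\<mu>\<in>box N. Polynomial.monom (tt P \<alpha> \<mu> * mono d \<mu>) (fdeg \<mu>)) - Polynomial.monom C 1"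
  have pg: "poly g t = TT P N \<alpha> (\<lambda>i. t * d i) - C * t" for t
    by (simp add: g_def poly_sum poly_monom TT_def mono_scale algebra_simps)
  have roots: "range (of_nat :: nat \<Rightarrow> 'a) \<subseteq> {x. poly g x = 0}"
    using ind by (auto simp: pg)
  have "infinite (range (of_nat :: nat \<Rightarrow> 'a))"
    using finite_imageD[OF _ inj_on_subset[OF inj_of_nat subset_UNIV]] by auto
  then have "g = 0" using roots poly_roots_finite[of g] finite_subset by blast
  then have "coeff g 1 = 0" by simp
  moreover have "coeff g 1 = - C"
  proof -
    have "(\<Sum>\<mu>\<in>box N. coeff (Polynomial.monom (tt P \<alpha> \<mu> * mono d \<mu>) (fdeg \<mu>)) 1) = 0"
      by (rule sum.neutral) (auto simp: coeff_monom tt_def)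
    then show ?thesis by (simp add: g_def coeff_sum coeff_monom)
  qed
  ultimately have "C = 0" by simp
  then show ?thesis by (simp add: C_def)
qed



abbreviation pm :: "('v::finite \<Rightarrow> nat) \<Rightarrow> ('v \<Rightarrow>\<^sub>0 nat)" where
  "pm f \<equiv> Abs_poly_mapping f"

lemma lookup_pm [simp]: "Poly_Mapping.lookup (pm (f::'v::finite \<Rightarrow> nat)) = f"
  by (simp add: lookup_Abs_poly_mapping)

lemma pm_lookup [simp]: "pm (Poly_Mapping.lookup m) = m"
  by (simp add: lookup_inverse)

lemma lookup_single0_mult:
  "Poly_Mapping.lookup (Poly_Mapping.single 0 s * p) k = (s::'b::comm_semiring_1) * Poly_Mapping.lookup p k"
  unfolding mult_map_scale_conv_mult[symmetric] by (simp add: map.rep_eq when_def)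

lemma lookup_mconst_mult:
  "Poly_Mapping.lookup (mconst s * p) k = (s::'b::comm_semiring_1) * Poly_Mapping.lookup p k"
  unfolding mconst_def by (rule lookup_single0_mult)

lemma single_pow:
  "(Poly_Mapping.single (Poly_Mapping.single i (1::nat)) (1::'b::comm_semiring_1)) ^ k
     = Poly_Mapping.single (Poly_Mapping.single i k) 1"
  by (induction k) (simp_all add: mult_single single_add[symmetric] add.commute)

lemma prod_single:
  fixes a :: "'i \<Rightarrow> 'k::comm_monoid_add" and b :: "'i \<Rightarrow> 'b::comm_semiring_1"
  shows "finite I \<Longrightarrow> (\<Prod>i\<in>I. Poly_Mapping.single (a i) (b i)) = Poly_Mapping.single (\<Sum>i\<in>I. a i) (\<Prod>i\<in>I. b i)"
  by (induction I rule: finite_induct) (simp_all add: mult_single)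

lemma sum_single_pm: "(\<Sum>i\<in>UNIV. Poly_Mapping.single i (g i)) = pm (g :: 'v::finite \<Rightarrow> nat)"
  by (rule poly_mapping_eqI) (simp add: lookup_sum lookup_single when_def)

lemma binom_term:
  fixes i :: 'v
  shows "(mvar i + mconst (mvar i)) ^ n
   = (\<Sum>k\<le>n. Poly_Mapping.single (Poly_Mapping.single i k)
        (Poly_Mapping.single (Poly_Mapping.single i (n - k)) (of_nat (n choose k) :: 'a::comm_ring_1)))"
proof -
  have "(mvar i + mconst (mvar i)) ^ n = (\<Sum>k\<le>n. of_nat (n choose k) * (mvar i :: ('v, ('v,'a) mpoly) mpoly) ^ k * mconst (mvar i) ^ (n - k))"
    by (simp add: binomial_ring)
  also have "\<dots> = (\<Sum>k\<le>n. Poly_Mapping.single (Poly_Mapping.single i k)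
        (Poly_Mapping.single (Poly_Mapping.single i (n - k)) (of_nat (n choose k) :: 'a::comm_ring_1)))"
  proof (rule sum.cong[OF refl])
    fix k
    have m: "mconst (mvar i :: ('v,'a) mpoly) ^ j = Poly_Mapping.single 0 (Poly_Mapping.single (Poly_Mapping.single i j) 1)" for j
      by (induction j) (simp_all add: mconst_def mvar_def mult_single single_add[symmetric] add.commute)
    have c: "(of_nat c :: ('v, ('v,'a) mpoly) mpoly) = Poly_Mapping.single 0 (Poly_Mapping.single 0 (of_nat c))" for c
      by simp
    have c2: "(of_nat c :: ('v,'a) mpoly) * Poly_Mapping.single m 1 = Poly_Mapping.single m (of_nat c)" for c m
    proof -
      have "(of_nat c :: ('v,'a) mpoly) * Poly_Mapping.single m 1 = Poly_Mapping.single 0 (of_nat c) * Poly_Mapping.single m 1"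
        by simp
      also have "\<dots> = Poly_Mapping.single m (of_nat c)" by (simp only: mult_single) simp
      finally show ?thesis .
    qed
    show "of_nat (n choose k) * (mvar i :: ('v, ('v,'a) mpoly) mpoly) ^ k * mconst (mvar i) ^ (n - k) =
      Poly_Mapping.single (Poly_Mapping.single i k) (Poly_Mapping.single (Poly_Mapping.single i (n - k)) (of_nat (n choose k)))"
      apply (subst c)
      apply (subst m)
      apply (simp only: mvar_def single_pow mult_single)
      apply (simp add: c2)
      done
  qed
  finally show ?thesis .
qed


lemma G_expand:
  fixes \<beta> :: "'v::finite \<Rightarrow>\<^sub>0 nat"
  shows "(\<Prod>i\<in>UNIV. (mvar i + mconst (mvar i)) ^ Poly_Mapping.lookup \<beta> i :: ('v, ('v,'a::comm_ring_1) mpoly) mpoly)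
    = (\<Sum>\<kappa>\<in>{\<kappa>. \<forall>i. \<kappa> i \<le> Poly_Mapping.lookup \<beta> i}. Poly_Mapping.single (pm \<kappa>)
         (Poly_Mapping.single (pm (\<lambda>i. Poly_Mapping.lookup \<beta> i - \<kappa> i)) (Cm (Poly_Mapping.lookup \<beta>) \<kappa>)))"
proof -
  let ?b = "Poly_Mapping.lookup \<beta>"
  have "(\<Prod>i\<in>UNIV. (mvar i + mconst (mvar i)) ^ ?b i :: ('v, ('v,'a) mpoly) mpoly)
     = (\<Prod>i\<in>UNIV. \<Sum>k\<in>{..?b i}. Poly_Mapping.single (Poly_Mapping.single i k)
        (Poly_Mapping.single (Poly_Mapping.single i (?b i - k)) (of_nat (?b i choose k) :: 'a)))"
    by (simp only: binom_term atMost_def)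
  also have "\<dots> = (\<Sum>g\<in>PiE UNIV (\<lambda>i. {..?b i}). \<Prod>i\<in>UNIV. Poly_Mapping.single (Poly_Mapping.single i (g i))
        (Poly_Mapping.single (Poly_Mapping.single i (?b i - g i)) (of_nat (?b i choose g i) :: 'a)))"
    by (rule prod_sum_PiE) auto
  also have "PiE UNIV (\<lambda>i. {..?b i}) = {\<kappa>. \<forall>i. \<kappa> i \<le> ?b i}"
    by (auto simp: PiE_UNIV_domain)
  also have "(\<Sum>g\<in>{\<kappa>. \<forall>i. \<kappa> i \<le> ?b i}. \<Prod>i\<in>UNIV. Poly_Mapping.single (Poly_Mapping.single i (g i))
        (Poly_Mapping.single (Poly_Mapping.single i (?b i - g i)) (of_nat (?b i choose g i) :: 'a)))
     = (\<Sum>\<kappa>\<in>{\<kappa>. \<forall>i. \<kappa> i \<le> ?b i}. Poly_Mapping.single (pm \<kappa>)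
         (Poly_Mapping.single (pm (\<lambda>i. ?b i - \<kappa> i)) (Cm ?b \<kappa>)))"
    by (simp only: prod_single[OF finite_UNIV] sum_single_pm Cm_def)
  finally show ?thesis .
qed

lemma finite_le: "finite {\<kappa>::'v::finite\<Rightarrow>nat. \<forall>i. \<kappa> i \<le> b i}"
proof -
  have "{\<kappa>::'v\<Rightarrow>nat. \<forall>i. \<kappa> i \<le> b i} = PiE UNIV (\<lambda>i. {..b i})"
    by (auto simp: PiE_UNIV_domain)
  then show ?thesis by (simp add: finite_PiE)
qed

lemma lookup_G:
  fixes \<alpha> \<beta> \<mu> :: "'v::finite \<Rightarrow>\<^sub>0 nat"
  shows "Poly_Mapping.lookup (Poly_Mapping.lookup
     (\<Prod>i\<in>UNIV. (mvar i + mconst (mvar i)) ^ Poly_Mapping.lookup \<beta> i :: ('v, ('v,'a::comm_ring_1) mpoly) mpoly) \<alpha>) \<mu>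
   = (if \<beta> = \<alpha> + \<mu> then Cm (Poly_Mapping.lookup \<beta>) (Poly_Mapping.lookup \<alpha>) else 0)"
proof -
  let ?b = "Poly_Mapping.lookup \<beta>" and ?a = "Poly_Mapping.lookup \<alpha>"
  let ?X = "\<lambda>\<kappa>. Poly_Mapping.single (pm (\<lambda>i. ?b i - \<kappa> i)) (Cm ?b \<kappa> :: 'a)"
  have "Poly_Mapping.lookup (\<Sum>\<kappa>\<in>{\<kappa>. \<forall>i. \<kappa> i \<le> ?b i}. Poly_Mapping.single (pm \<kappa>) (?X \<kappa>)) \<alpha>
      = (\<Sum>\<kappa>\<in>{\<kappa>. \<forall>i. \<kappa> i \<le> ?b i}. if \<kappa> = ?a then ?X \<kappa> else 0)"
    unfolding lookup_sum
  proof (rule sum.cong[OF refl])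
    fix \<kappa> :: "'v \<Rightarrow> nat"
    have "(pm \<kappa> = \<alpha>) = (\<kappa> = ?a)" by (metis lookup_pm pm_lookup)
    then show "Poly_Mapping.lookup (Poly_Mapping.single (pm \<kappa>) (?X \<kappa>)) \<alpha> = (if \<kappa> = ?a then ?X \<kappa> else 0)"
      by (simp add: lookup_single when_def)
  qed
  also have "\<dots> = (if ?a \<in> {\<kappa>. \<forall>i. \<kappa> i \<le> ?b i} then ?X ?a else 0)"
    by (rule sum.delta[OF finite_le])
  finally have e: "Poly_Mapping.lookup (\<Sum>\<kappa>\<in>{\<kappa>. \<forall>i. \<kappa> i \<le> ?b i}. Poly_Mapping.single (pm \<kappa>) (?X \<kappa>)) \<alpha>
      = (if \<forall>i. ?a i \<le> ?b i then ?X ?a else 0)" by simp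
  have iff: "((\<forall>i. ?a i \<le> ?b i) \<and> pm (\<lambda>i. ?b i - ?a i) = \<mu>) = (\<beta> = \<alpha> + \<mu>)"
  proof
    assume h: "(\<forall>i. ?a i \<le> ?b i) \<and> pm (\<lambda>i. ?b i - ?a i) = \<mu>"
    then have "Poly_Mapping.lookup \<mu> = (\<lambda>i. ?b i - ?a i)" by auto
    then show "\<beta> = \<alpha> + \<mu>" using h by (intro poly_mapping_eqI) (simp add: lookup_add)
  next
    assume "\<beta> = \<alpha> + \<mu>"
    then have "?b = (\<lambda>i. ?a i + Poly_Mapping.lookup \<mu> i)" by (simp add: lookup_add fun_eq_iff)
    then show "(\<forall>i. ?a i \<le> ?b i) \<and> pm (\<lambda>i. ?b i - ?a i) = \<mu>" by simp
  qed
  show ?thesis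
    unfolding G_expand e using iff
    by (auto simp: lookup_single when_def)
qed

lemma lookup_shift:
  fixes \<alpha> \<mu> :: "'v::finite \<Rightarrow>\<^sub>0 nat" and p :: "('v,'a::comm_ring_1) mpoly"
  shows "Poly_Mapping.lookup (Poly_Mapping.lookup (shift_poly p) \<alpha>) \<mu>
     = Poly_Mapping.lookup p (\<alpha> + \<mu>) * Cm (Poly_Mapping.lookup (\<alpha> + \<mu>)) (Poly_Mapping.lookup \<alpha>)"
proof -
  have "Poly_Mapping.lookup (Poly_Mapping.lookup (shift_poly p) \<alpha>) \<mu>
     = (\<Sum>\<beta>\<in>Poly_Mapping.keys p. if \<beta> = \<alpha> + \<mu> then Poly_Mapping.lookup p \<beta> * Cm (Poly_Mapping.lookup \<beta>) (Poly_Mapping.lookup \<alpha>) else 0)"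
    unfolding shift_poly_def lookup_sum
  proof (rule sum.cong[OF refl])
    fix \<beta> :: "'v \<Rightarrow>\<^sub>0 nat"
    show "Poly_Mapping.lookup (Poly_Mapping.lookup (mconst (mconst (Poly_Mapping.lookup p \<beta>)) *
        (\<Prod>i\<in>UNIV. (mvar i + mconst (mvar i)) ^ Poly_Mapping.lookup \<beta> i)) \<alpha>) \<mu>
      = (if \<beta> = \<alpha> + \<mu> then Poly_Mapping.lookup p \<beta> * Cm (Poly_Mapping.lookup \<beta>) (Poly_Mapping.lookup \<alpha>) else 0)"
      unfolding lookup_mconst_mult lookup_G by simp
  qed
  also have "\<dots> = Poly_Mapping.lookup p (\<alpha> + \<mu>) * Cm (Poly_Mapping.lookup (\<alpha> + \<mu>)) (Poly_Mapping.lookup \<alpha>)"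
    by (subst sum.delta[OF finite_keys]) (auto simp: in_keys_iff)
  finally show ?thesis .
qed

lemma lookup_lift:
  fixes \<alpha> :: "'v::finite \<Rightarrow>\<^sub>0 nat" and q :: "('v,'a::comm_ring_1) mpoly"
  shows "Poly_Mapping.lookup (lift_poly q) \<alpha> = mconst (Poly_Mapping.lookup q \<alpha>)"
  unfolding lift_poly_def lookup_sum
  by (simp add: lookup_single when_def sum.delta in_keys_iff mconst_def)

lemma Cm_Bn: "Cm (Poly_Mapping.lookup (\<alpha> + \<mu>)) (Poly_Mapping.lookup \<alpha>) = (Bn (Poly_Mapping.lookup \<alpha>) (Poly_Mapping.lookup \<mu>) :: 'a::comm_ring_1)"
  unfolding Cm_def Bn_def lookup_add
  by (rule prod.cong[OF refl]) (metis add_diff_cancel_left' binomial_symmetric le_add1)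

lemma lookup_cf:
  fixes \<alpha> \<mu> :: "'v::finite \<Rightarrow>\<^sub>0 nat" and p q :: "('v,'a::comm_ring_1) mpoly"
  shows "Poly_Mapping.lookup (cf p q \<alpha>) \<mu> = Poly_Mapping.lookup p (\<alpha> + \<mu>) * Bn (Poly_Mapping.lookup \<alpha>) (Poly_Mapping.lookup \<mu>)
     - (if \<mu> = 0 then Poly_Mapping.lookup q \<alpha> else 0)"
proof -
  have "Poly_Mapping.lookup (mconst c) \<mu> = (if \<mu> = 0 then c else 0)" for c :: 'a
    by (auto simp: mconst_def lookup_single when_def)
  then show ?thesis
    unfolding cf_def lookup_minus lookup_shift lookup_lift Cm_Bn by simp
qed



lemma meval_mono: "meval f a = (\<Sum>m\<in>Poly_Mapping.keys f. Poly_Mapping.lookup f m * mono a (Poly_Mapping.lookup m))"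
  by (simp add: meval_def mono_def)

lemma meval_superset:
  assumes "finite S" "Poly_Mapping.keys f \<subseteq> S"
  shows "meval f a = (\<Sum>m\<in>S. Poly_Mapping.lookup f m * mono a (Poly_Mapping.lookup m))"
  unfolding meval_mono
  by (rule sum.mono_neutral_left[OF assms(1,2)]) (auto simp: in_keys_iff)

lemma meval_add: "meval (f + g) a = meval f a + meval g a"
proof -
  let ?S = "Poly_Mapping.keys f \<union> Poly_Mapping.keys g"
  have "meval (f + g) a = (\<Sum>m\<in>?S. Poly_Mapping.lookup (f+g) m * mono a (Poly_Mapping.lookup m))"
    by (rule meval_superset) (use keys_add[of f g] in auto)
  moreover have "meval f a = (\<Sum>m\<in>?S. Poly_Mapping.lookup f m * mono a (Poly_Mapping.lookup m))"
    by (rule meval_superset) auto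
  moreover have "meval g a = (\<Sum>m\<in>?S. Poly_Mapping.lookup g m * mono a (Poly_Mapping.lookup m))"
    by (rule meval_superset) auto
  ultimately show ?thesis by (simp add: lookup_add sum.distrib algebra_simps)
qed

lemma meval_mconst: "meval (mconst c) a = (c::'a::comm_ring_1)"
  by (simp add: meval_def mconst_def)

lemma meval_zero [simp]: "meval 0 a = 0"
  by (simp add: meval_def)

lemma lookup_hcomp: "Poly_Mapping.lookup (hcomp k f) m = (if mdeg m = k then Poly_Mapping.lookup f m else 0)"
  unfolding hcomp_def lookup_sum
  by (simp add: lookup_single when_def sum.delta' in_keys_iff)

lemma meval_hcomp:
  "meval (hcomp k f) a = (\<Sum>m\<in>Poly_Mapping.keys f. (if mdeg m = k then Poly_Mapping.lookup f m * mono a (Poly_Mapping.lookup m) else 0))"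
proof -
  have "Poly_Mapping.keys (hcomp k f) \<subseteq> Poly_Mapping.keys f"
    by (auto simp: in_keys_iff lookup_hcomp split: if_splits)
  then show ?thesis
    by (subst meval_superset[of "Poly_Mapping.keys f"]) (auto simp: lookup_hcomp intro: sum.cong)
qed

definition Thi :: "('v::finite,'a::comm_ring_1) mpoly \<Rightarrow> ('v \<Rightarrow> 'a) \<Rightarrow> 'a" where
  "Thi f a = (\<Sum>m\<in>Poly_Mapping.keys f. (if 2 \<le> mdeg m then Poly_Mapping.lookup f m * mono a (Poly_Mapping.lookup m) else 0))"

lemma linearize_Thi: "linearize a f = hcomp 0 f + hcomp 1 f + mconst (Thi f a)"
proof -
  let ?g = "\<lambda>m. Poly_Mapping.lookup f m * mono a (Poly_Mapping.lookup m)"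
  let ?K = "{k \<in> mdeg ` Poly_Mapping.keys f. 2 \<le> k}"
  have "(\<Sum>k\<in>?K. meval (hcomp k f) a) = (\<Sum>k\<in>?K. \<Sum>m\<in>{m \<in> {m\<in>Poly_Mapping.keys f. 2 \<le> mdeg m}. mdeg m = k}. ?g m)"
  proof (rule sum.cong[OF refl])
    fix k assume k: "k \<in> ?K"
    have "meval (hcomp k f) a = (\<Sum>m\<in>{m\<in>Poly_Mapping.keys f. mdeg m = k}. ?g m)"
      unfolding meval_hcomp by (simp add: sum.inter_filter)
    also have "{m\<in>Poly_Mapping.keys f. mdeg m = k} = {m \<in> {m\<in>Poly_Mapping.keys f. 2 \<le> mdeg m}. mdeg m = k}"
      using k by auto
    finally show "meval (hcomp k f) a = (\<Sum>m\<in>{m \<in> {m\<in>Poly_Mapping.keys f. 2 \<le> mdeg m}. mdeg m = k}. ?g m)" .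
  qed
  also have "\<dots> = (\<Sum>m\<in>{m\<in>Poly_Mapping.keys f. 2 \<le> mdeg m}. ?g m)"
    by (rule sum.group) auto
  also have "\<dots> = Thi f a"
    unfolding Thi_def by (simp add: sum.inter_filter)
  finally show ?thesis unfolding linearize_def by simp
qed

lemma meval_linearize_self: "meval (linearize a f) a = meval f a"
proof -
  have "meval (linearize a f) a = meval (hcomp 0 f) a + meval (hcomp 1 f) a + Thi f a"
    by (simp add: linearize_Thi meval_add meval_mconst)
  also have "\<dots> = meval f a"
    unfolding meval_hcomp Thi_def meval_mono[of f] sum.distrib[symmetric]
    by (rule sum.cong[OF refl]) auto
  finally show ?thesis .
qed


lemma sum_box:
  fixes f :: "('v::finite,'a::comm_ring_1) mpoly"
  assumes kb: "\<And>m. m \<in> Poly_Mapping.keys f \<Longrightarrow> Poly_Mapping.lookup m \<in> box N"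
  shows "(\<Sum>m\<in>Poly_Mapping.keys f. Poly_Mapping.lookup f m * h m) = (\<Sum>\<nu>\<in>box N. Poly_Mapping.lookup f (pm \<nu>) * h (pm \<nu>))"
proof -
  have inj: "inj_on pm (box N :: ('v \<Rightarrow> nat) set)"
    by (rule inj_onI) (metis lookup_pm)
  have "(\<Sum>\<nu>\<in>box N. Poly_Mapping.lookup f (pm \<nu>) * h (pm \<nu>)) = (\<Sum>m\<in>pm ` box N. Poly_Mapping.lookup f m * h m)"
    by (rule sum.reindex[OF inj, unfolded comp_def, symmetric])
  also have "\<dots> = (\<Sum>m\<in>Poly_Mapping.keys f. Poly_Mapping.lookup f m * h m)"
  proof (rule sum.mono_neutral_right)
    show "finite (pm ` box N)" by (simp add: finite_box)
    show "Poly_Mapping.keys f \<subseteq> pm ` box N"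
      using kb by (metis image_eqI pm_lookup subsetI)
  qed (auto simp: in_keys_iff)
  finally show ?thesis by simp
qed

lemma keys_cf_box:
  fixes p q :: "('v::finite,'a::comm_ring_1) mpoly"
  assumes Nb: "\<And>\<gamma>. \<gamma> \<in> Poly_Mapping.keys p \<Longrightarrow> Poly_Mapping.lookup \<gamma> \<in> box N"
    and m: "m \<in> Poly_Mapping.keys (cf p q \<beta>)"
  shows "Poly_Mapping.lookup m \<in> box N"
proof (cases "m = 0")
  case True then show ?thesis by (simp add: box_def)
next
  case False
  with m have "Poly_Mapping.lookup p (\<beta> + m) \<noteq> 0" by (auto simp: in_keys_iff lookup_cf)
  then have "Poly_Mapping.lookup (\<beta> + m) \<in> box N" using Nb by (simp add: in_keys_iff)
  then show ?thesis by (auto simp: box_def lookup_add intro: le_trans[OF le_add2])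
qed

lemma pm_zero_iff: "(pm \<nu> = 0) = (\<nu> = (\<lambda>_. 0::nat))"
  by (auto simp: poly_mapping_eq_iff fun_eq_iff)

lemma meval_cf:
  fixes p q :: "('v::finite,'a::comm_ring_1) mpoly"
  assumes Nb: "\<And>\<gamma>. \<gamma> \<in> Poly_Mapping.keys p \<Longrightarrow> Poly_Mapping.lookup \<gamma> \<in> box N"
  shows "meval (cf p q \<beta>) a = PP (\<lambda>\<nu>. Poly_Mapping.lookup p (pm \<nu>)) N (Poly_Mapping.lookup \<beta>) a - Poly_Mapping.lookup q \<beta>"
proof -
  have "meval (cf p q \<beta>) a = (\<Sum>\<nu>\<in>box N. Poly_Mapping.lookup (cf p q \<beta>) (pm \<nu>) * mono a \<nu>)"
    unfolding meval_mono by (subst sum_box[OF keys_cf_box[OF Nb]]) auto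
  also have "\<dots> = (\<Sum>\<nu>\<in>box N. Poly_Mapping.lookup p (pm (\<lambda>i. Poly_Mapping.lookup \<beta> i + \<nu> i)) * Bn (Poly_Mapping.lookup \<beta>) \<nu> * mono a \<nu>
       - (if \<nu> = (\<lambda>_. 0) then Poly_Mapping.lookup q \<beta> else 0))"
  proof (rule sum.cong[OF refl])
    fix \<nu> :: "'v \<Rightarrow> nat"
    have "\<beta> + pm \<nu> = pm (\<lambda>i. Poly_Mapping.lookup \<beta> i + \<nu> i)"
      by (rule poly_mapping_eqI) (simp add: lookup_add)
    then show "Poly_Mapping.lookup (cf p q \<beta>) (pm \<nu>) * mono a \<nu> = Poly_Mapping.lookup p (pm (\<lambda>i. Poly_Mapping.lookup \<beta> i + \<nu> i)) * Bn (Poly_Mapping.lookup \<beta>) \<nu> * mono a \<nu>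
       - (if \<nu> = (\<lambda>_. 0) then Poly_Mapping.lookup q \<beta> else 0)"
      by (simp add: lookup_cf pm_zero_iff algebra_simps)
  qed
  also have "\<dots> = PP (\<lambda>\<nu>. Poly_Mapping.lookup p (pm \<nu>)) N (Poly_Mapping.lookup \<beta>) a - Poly_Mapping.lookup q \<beta>"
    by (simp add: sum_subtractf PP_def finite_box)
  finally show ?thesis .
qed

lemma mdeg_pm: "mdeg (pm \<nu>) = fdeg \<nu>"
  by (simp add: mdeg_def fdeg_def)

lemma Thi_cf:
  fixes p q :: "('v::finite,'a::comm_ring_1) mpoly"
  assumes Nb: "\<And>\<gamma>. \<gamma> \<in> Poly_Mapping.keys p \<Longrightarrow> Poly_Mapping.lookup \<gamma> \<in> box N"
  shows "Thi (cf p q \<alpha>) a = TT (\<lambda>\<nu>. Poly_Mapping.lookup p (pm \<nu>)) N (Poly_Mapping.lookup \<alpha>) a"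
proof -
  have "Thi (cf p q \<alpha>) a = (\<Sum>m\<in>Poly_Mapping.keys (cf p q \<alpha>). Poly_Mapping.lookup (cf p q \<alpha>) m *
          (if 2 \<le> mdeg m then mono a (Poly_Mapping.lookup m) else 0))"
    unfolding Thi_def by (rule sum.cong[OF refl]) simp
  also have "\<dots> = (\<Sum>\<nu>\<in>box N. Poly_Mapping.lookup (cf p q \<alpha>) (pm \<nu>) * (if 2 \<le> fdeg \<nu> then mono a \<nu> else 0))"
    by (subst sum_box[OF keys_cf_box[OF Nb]]) (auto simp: mdeg_pm cong: if_cong)
  also have "\<dots> = TT (\<lambda>\<nu>. Poly_Mapping.lookup p (pm \<nu>)) N (Poly_Mapping.lookup \<alpha>) a"
    unfolding TT_def
  proof (rule sum.cong[OF refl])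
    fix \<nu> :: "'v \<Rightarrow> nat"
    have e: "\<alpha> + pm \<nu> = pm (\<lambda>i. Poly_Mapping.lookup \<alpha> i + \<nu> i)"
      by (rule poly_mapping_eqI) (simp add: lookup_add)
    show "Poly_Mapping.lookup (cf p q \<alpha>) (pm \<nu>) * (if 2 \<le> fdeg \<nu> then mono a \<nu> else 0) =
       tt (\<lambda>\<nu>. Poly_Mapping.lookup p (pm \<nu>)) (Poly_Mapping.lookup \<alpha>) \<nu> * mono a \<nu>"
    proof (cases "2 \<le> fdeg \<nu>")
      case True
      then have "\<nu> \<noteq> (\<lambda>_. 0)" by (auto simp: fdeg_def)
      then show ?thesis using True by (simp add: lookup_cf pm_zero_iff tt_def e)
    qed (simp add: tt_def)
  qed
  finally show ?thesis .
qed


theorem mainTheorem5: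
  fixes p q :: "('v::finite, 'a::field_char_0) mpoly"
    and Sc :: "nat \<Rightarrow> ('v \<Rightarrow>\<^sub>0 nat) set"
    and m l :: nat
    and r s :: "'v \<Rightarrow> 'a"
  assumes "admissible_cover p q Sc m"
    and "l \<le> m"
    and "r \<in> zero_set (cf p q ` (\<Union>i\<in>{0..<l}. Sc i))"
    and "s \<in> zero_set (cf p q ` (\<Union>i\<in>{0..<l}. Sc i))"
    and "\<alpha> \<in> (\<Union>i\<in>{0..l}. Sc i)"
  shows "linearize r (cf p q \<alpha>) = linearize s (cf p q \<alpha>)
     \<and> meval (cf p q \<alpha>) r = meval (linearize s (cf p q \<alpha>)) r"
proof -
  note adm = assms(1)[unfolded admissible_cover_def]
  have "finite ((\<lambda>(\<gamma>,i). Poly_Mapping.lookup \<gamma> i) ` (Poly_Mapping.keys p \<times> (UNIV::'v set)))"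
    by simp
  from finite_nat_set_iff_bounded_le[THEN iffD1, OF this]
  obtain N where N: "\<forall>x\<in>(\<lambda>(\<gamma>,i). Poly_Mapping.lookup \<gamma> i) ` (Poly_Mapping.keys p \<times> (UNIV::'v set)). x \<le> N"
    by (elim exE)
  have Nb: "Poly_Mapping.lookup \<gamma> \<in> box N" if g: "\<gamma> \<in> Poly_Mapping.keys p" for \<gamma>
    unfolding box_def
  proof (intro CollectI allI)
    fix j
    have "Poly_Mapping.lookup \<gamma> j \<in> (\<lambda>(\<gamma>,i). Poly_Mapping.lookup \<gamma> i) ` (Poly_Mapping.keys p \<times> (UNIV::'v set))"
      by (rule image_eqI[where x="(\<gamma>,j)"]) (use g in auto)
    with N show "Poly_Mapping.lookup \<gamma> j \<le> N" by blast
  qed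
  let ?P = "\<lambda>\<nu>. Poly_Mapping.lookup p (pm \<nu>)"
  let ?f = "cf p q \<alpha>"
  have key: "Thi ?f r = Thi ?f s"
  proof -
    from assms(5) obtain i where i: "i \<le> l" "\<alpha> \<in> Sc i" by auto
    show ?thesis
    proof (cases "i = 0")
      case True
      have "\<forall>\<alpha>\<in>Sc 0. total_deg_le (cf p q \<alpha>) 1" by (rule conjunct1[OF conjunct2[OF adm]])
      then have "total_deg_le ?f 1" using i(2) True by simp
      then have "Thi ?f a = 0" for a
        unfolding Thi_def total_deg_le_def by (intro sum.neutral) auto
      then show ?thesis by simp
    next
      case False
      then have im: "i \<in> {1..m}" using i assms(2) by auto
      have z: "meval (cf p q \<beta>) r = 0 \<and> meval (cf p q \<beta>) s = 0" if "exp_gt \<beta> \<alpha>" for \<beta>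
      proof (cases "cf p q \<beta> = 0")
        case True then show ?thesis by simp
      next
        case False
        have "\<forall>l\<in>{1..m}. \<forall>\<alpha>\<in>Sc l. \<forall>\<beta>. exp_gt \<beta> \<alpha> \<and> cf p q \<beta> \<noteq> 0 \<longrightarrow> \<beta> \<in> (\<Union>i\<in>{0..<l}. Sc i)"
          by (rule conjunct2[OF conjunct2[OF adm]])
        then have "\<beta> \<in> (\<Union>j\<in>{0..<i}. Sc j)" using im i(2) that False by blast
        then have "\<beta> \<in> (\<Union>j\<in>{0..<l}. Sc j)" using i(1) by auto
        then have "cf p q \<beta> \<in> cf p q ` (\<Union>j\<in>{0..<l}. Sc j)" by (rule imageI)
        then show ?thesis using assms(3,4) unfolding zero_set_def by blast
      qed
      have hyp: "PP ?P N (\<lambda>j. Poly_Mapping.lookup \<alpha> j + \<nu> j) r = PP ?P N (\<lambda>j. Poly_Mapping.lookup \<alpha> j + \<nu> j) s"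
        if nz: "\<nu> \<noteq> (\<lambda>_. 0)" for \<nu>
      proof -
        define \<beta> where "\<beta> = pm (\<lambda>j. Poly_Mapping.lookup \<alpha> j + \<nu> j)"
        have lb: "Poly_Mapping.lookup \<beta> = (\<lambda>j. Poly_Mapping.lookup \<alpha> j + \<nu> j)" by (simp add: \<beta>_def)
        have "\<beta> \<noteq> \<alpha>"
        proof
          assume "\<beta> = \<alpha>"
          then have "(\<lambda>j. Poly_Mapping.lookup \<alpha> j + \<nu> j) = Poly_Mapping.lookup \<alpha>" using lb by simp
          then have "\<nu> = (\<lambda>_. 0)" by (auto simp: fun_eq_iff dest: fun_cong)
          with nz show False by simp
        qed
        then have "exp_gt \<beta> \<alpha>" by (simp add: exp_gt_def exp_ge_def lb)
        from z[OF this] show ?thesis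
          using meval_cf[OF Nb, where q=q and \<beta>=\<beta> and a=r] meval_cf[OF Nb, where q=q and \<beta>=\<beta> and a=s] by (simp add: lb)
      qed
      have "TT ?P N (Poly_Mapping.lookup \<alpha>) r = TT ?P N (Poly_Mapping.lookup \<alpha>) s"
      proof (rule core[OF _ hyp])
        fix \<gamma> :: "'v \<Rightarrow> nat" assume "?P \<gamma> \<noteq> 0"
        then have "pm \<gamma> \<in> Poly_Mapping.keys p" by (simp add: in_keys_iff)
        from Nb[OF this] show "\<gamma> \<in> box N" by simp
      qed
      then show ?thesis using Thi_cf[OF Nb] by metis
    qed
  qed
  have lin: "linearize r ?f = linearize s ?f"
    unfolding linearize_Thi key ..
  moreover have "meval ?f r = meval (linearize s ?f) r"
    using meval_linearize_self[of r ?f] lin by simp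
  ultimately show ?thesis by simp
qed


end
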